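(* Let $S=\{\rho_1=0<\rho_2<\cdots\}$ be an Arf numerical semigroup with conductor $c=\rho_r$. Let $d$ be an odd integer with $1\le d\le 2r-3$, write $d=2t+1$, and put $p_t=c+\rho_{t+1}-1$. Then $$\{\rho\in S:\ \#A[\rho]<d\}\subseteq[0,p_t]\cap S.$$
   Context: A numerical semigroup is a submonoid $S$ of $(\mathbb{N}_0,+)$ with finite complement, with elements listed increasingly. $S$ is Arf if $\rho_i+\rho_j-\rho_k\in S$ for all positive integers $i\ge j\ge k$. The conductor $c$ is the smallest integer such that all integers $\ge c$ lie in $S$, with $c=\rho_r$. For $\rho\in S$, $A[\rho]=\{p\in S:\ \rho-p\in S\}$. *)

theory Defs
  imports Main "HOL-Library.Infinite_Set"
begin

definition numerical_semigroup :: "nat set \<Rightarrow> bool" where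
  "numerical_semigroup S \<longleftrightarrow> 0 \<in> S \<and> (\<forall>x\<in>S. \<forall>y\<in>S. x + y \<in> S) \<and> finite (UNIV - S)"

text \<open>The i-th element rho_i of S (1-indexed, increasing order), so rho S 1 = 0.\<close>
definition rho :: "nat set \<Rightarrow> nat \<Rightarrow> nat" where
  "rho S i = enumerate S (i - 1)"

definition Arf :: "nat set \<Rightarrow> bool" where
  "Arf S \<longleftrightarrow> (\<forall>i j k. 1 \<le> k \<and> k \<le> j \<and> j \<le> i \<longrightarrow> rho S i + rho S j - rho S k \<in> S)"

definition conductor :: "nat set \<Rightarrow> nat" where
  "conductor S = (LEAST c. \<forall>n\<ge>c. n \<in> S)"

text \<open>A[rho] = {p in S : rho - p in S}; elements of S are nonnegative, so p \<le> rho.\<close>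
definition Aset :: "nat set \<Rightarrow> nat \<Rightarrow> nat set" where
  "Aset S x = {p \<in> S. p \<le> x \<and> x - p \<in> S}"

end

theory Submission
  imports Defs
begin

lemma ns_infinite: "numerical_semigroup S \<Longrightarrow> infinite S"
  unfolding numerical_semigroup_def
  using Diff_infinite_finite infinite_UNIV_nat by blast

lemma ns_conductor: assumes "numerical_semigroup S" "n \<ge> conductor S" shows "n \<in> S"
proof -
  have fin: "finite (UNIV - S)" using assms(1) unfolding numerical_semigroup_def by blast
  obtain m where m: "\<forall>y\<in>UNIV - S. y < m"
    using fin finite_nat_bounded by blast
  have "\<forall>n\<ge>m. n \<in> S" using m by (metis DiffI UNIV_I not_le)
  hence "\<forall>n\<ge>conductor S. n \<in> S" unfolding conductor_def by (rule LeastI)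
  thus ?thesis using assms(2) by blast
qed

lemma rho_mono: "infinite S \<Longrightarrow> 1 \<le> i \<Longrightarrow> i < j \<Longrightarrow> rho S i < rho S j"
  unfolding rho_def by (simp add: enumerate_mono)

lemma rho_in: "infinite S \<Longrightarrow> rho S i \<in> S"
  unfolding rho_def by (simp add: enumerate_in_set)

theorem mainTheorem13:
  fixes S :: "nat set" and r d t :: nat
  assumes "numerical_semigroup S" and "Arf S"
    and "r \<ge> 1" and "rho S r = conductor S"
    and "1 \<le> d" and "d + 3 \<le> 2 * r" and "d = 2 * t + 1"
  shows "{x \<in> S. card (Aset S x) < d} \<subseteq> {0 .. conductor S + rho S (t + 1) - 1} \<inter> S"
proof
  fix x assume xin: "x \<in> {x \<in> S. card (Aset S x) < d}"
  show "x \<in> {0 .. conductor S + rho S (t + 1) - 1} \<inter> S"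
  proof (rule ccontr)
    assume "\<not> ?thesis"
    hence xge: "x \<ge> conductor S + rho S (t + 1)" using xin by auto
    have inf: "infinite S" using assms(1) ns_infinite by blast
    define c where "c = conductor S"
    have tr: "t + 1 < r" using assms by linarith
    have rle: "\<And>i. i \<in> {1..t+1} \<Longrightarrow> rho S i \<le> rho S (t+1)"
      using rho_mono[OF inf] by (metis atLeastAtMost_iff le_eq_less_or_eq)
    have rlt: "\<And>i. i \<in> {1..t+1} \<Longrightarrow> rho S i < c"
      using rho_mono[OF inf] tr assms(4) c_def by (metis atLeastAtMost_iff le_less_trans)
    define R where "R = rho S ` {1..t+1}"
    define T where "T = (\<lambda>p. x - p) ` R"
    have injR: "inj_on (rho S) {1..t+1}"
      unfolding inj_on_def using rho_mono[OF inf]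
      by (metis atLeastAtMost_iff linorder_neqE_nat order_less_irrefl)
    have cR: "card R = t + 1" unfolding R_def using card_image[OF injR] by simp
    have Rle: "\<forall>p\<in>R. p \<le> rho S (t+1)" unfolding R_def using rle by blast
    have injT: "inj_on (\<lambda>p. x - p) R"
    proof (rule inj_onI)
      fix a b assume "a \<in> R" "b \<in> R" "x - a = x - b"
      moreover have "a \<le> x" "b \<le> x" using calculation Rle xge by fastforce+
      ultimately show "a = b" by linarith
    qed
    have cT: "card T = t + 1" unfolding T_def using card_image[OF injT] cR by simp
    have disj: "R \<inter> T = {}"
    proof -
      have "\<forall>p\<in>R. p < c" unfolding R_def using rlt by blast
      moreover have "\<forall>q\<in>T. q \<ge> c" unfolding T_def using Rle xge c_def by force
      ultimately show ?thesis by force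
    qed
    have sub: "R \<union> T \<subseteq> Aset S x"
    proof
      fix y assume "y \<in> R \<union> T"
      then show "y \<in> Aset S x"
      proof
        assume "y \<in> R"
        then have "y \<in> S" "y \<le> rho S (t+1)" unfolding R_def using rho_in[OF inf] rle by auto
        moreover have "x - y \<in> S" using ns_conductor[OF assms(1)] calculation(2) xge by auto
        ultimately show ?thesis unfolding Aset_def using xge by auto
      next
        assume "y \<in> T"
        then obtain p where p: "p \<in> R" "y = x - p" unfolding T_def by blast
        then have "p \<in> S" "p \<le> rho S (t+1)" unfolding R_def using rho_in[OF inf] rle by auto
        moreover have "x - p \<in> S" using ns_conductor[OF assms(1)] calculation(2) xge by auto
        moreover have "x - (x - p) = p" using calculation(2) xge by auto
        ultimately show ?thesis unfolding Aset_def using p by auto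
      qed
    qed
    have fin: "finite (Aset S x)" unfolding Aset_def by (rule finite_subset[of _ "{0..x}"]) auto
    have "card (R \<union> T) = 2 * t + 2"
      using card_Un_disjoint[of R T] disj cR cT unfolding R_def T_def by auto
    hence "2 * t + 2 \<le> card (Aset S x)" using card_mono[OF fin sub] by simp
    thus False using xin assms(7) by auto
  qed
qed

end
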